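(* Let $p\neq 2,5$ be a prime, let $K$ be the perfect closure of $\mathbb F_p(t)$, and let $C^-$ be the genus-$2$ curve $y^2=x^5-5x^3+5x+2-4t$ over $K$. Let $M$ be the Cartier–Manin matrix of $C^-$ with respect to the basis $\{dx/y,\ x\,dx/y\}$ of $H^0(C^-,\Omega^1)$. Then $$M=\begin{pmatrix}*&0\\0&*\end{pmatrix}\ \text{ if } p\equiv 1,4\pmod 5,\qquad M=\begin{pmatrix}0&*\\ *&0\end{pmatrix}\ \text{ if } p\equiv 2,3\pmod 5,$$ where the entries of $M^{(p)}$ lie in $\mathbb F_p[t]$.
   Context: The Cartier operator on $H^0(C,\Omega^1_C)$ is defined by $\mathscr C(d\varphi+\eta^p x^{p-1}dx)=\eta\,dx$ (every differential can be written in this form); it is $1/p$-linear. The Cartier–Manin matrix is its matrix with respect to a chosen basis (column $j$ = coordinates of the image of the $j$-th basis vector). $M^{(p)}$ denotes the matrix obtained by raising each entry of $M$ to the $p$-th power. *)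

theory Defs
  imports "HOL-Computational_Algebra.Polynomial" "HOL-Computational_Algebra.Primes"
begin

definition Fp_poly_at :: "'k::field \<Rightarrow> 'k set" where
  "Fp_poly_at t = {poly (map_poly of_int P) t | P :: int poly. True}"

text \<open>The field 'k (with distinguished element t) is the perfect closure of F_p(t):
  characteristic p, perfect, t transcendental over F_p, and every element is a
  p^n-th root of an element of F_p(t).\<close>
definition is_perfect_closure_Fpt :: "nat \<Rightarrow> 'k::field \<Rightarrow> bool" where
  "is_perfect_closure_Fpt p t \<longleftrightarrow>
     CHAR('k) = p \<and> prime p \<and>
     surj (\<lambda>a::'k. a ^ p) \<and>
     (\<forall>P :: int poly. poly (map_poly of_int P) t = 0 \<longrightarrow> (\<forall>i. int p dvd coeff P i)) \<and>
     (\<forall>a::'k. \<exists>n P Q. poly (map_poly of_int Q) t \<noteq> (0::'k) \<and>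
        a ^ (p ^ n) = poly (map_poly of_int (P :: int poly)) t / poly (map_poly of_int (Q :: int poly)) t)"

text \<open>'L is the function field K(x,y) of the curve y^2 = F(x) over the field K = 'k
  (embedded via iota), and D = d/dx is the K-linear derivation of L with D x = 1,
  so that a differential on the curve is h dx with h in L, and d phi = (D phi) dx.\<close>
definition is_hyperelliptic_function_field ::
  "('k::field \<Rightarrow> 'L::field) \<Rightarrow> 'k poly \<Rightarrow> 'L \<Rightarrow> 'L \<Rightarrow> ('L \<Rightarrow> 'L) \<Rightarrow> bool" where
  "is_hyperelliptic_function_field \<iota> F x y D \<longleftrightarrow>
     inj \<iota> \<and> \<iota> 1 = 1 \<and>
     (\<forall>a b. \<iota> (a + b) = \<iota> a + \<iota> b) \<and> (\<forall>a b. \<iota> (a * b) = \<iota> a * \<iota> b) \<and>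
     (\<forall>P. P \<noteq> 0 \<longrightarrow> poly (map_poly \<iota> P) x \<noteq> 0) \<and>
     y ^ 2 = poly (map_poly \<iota> F) x \<and>
     (\<forall>z. \<exists>P Q R. R \<noteq> 0 \<and>
        z = (poly (map_poly \<iota> P) x + poly (map_poly \<iota> Q) x * y) / poly (map_poly \<iota> R) x) \<and>
     (\<forall>a b. D (a + b) = D a + D b) \<and> (\<forall>a b. D (a * b) = a * D b + b * D a) \<and>
     (\<forall>c. D (\<iota> c) = 0) \<and> D x = 1"

text \<open>Cartier operator on differentials h dx:  C(d phi + eta^p x^(p-1) dx) = eta dx.
  Returned is the coefficient eta of dx.\<close>
definition cartier :: "('L::field \<Rightarrow> 'L) \<Rightarrow> 'L \<Rightarrow> nat \<Rightarrow> 'L \<Rightarrow> 'L" where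
  "cartier D x p h = (THE \<eta>. \<exists>\<phi>. h = D \<phi> + \<eta> ^ p * x ^ (p - 1))"

end

theory Submission
  imports Defs "HOL-Computational_Algebra.Formal_Power_Series"
begin

lemma hom0:
  fixes f :: "'a::comm_ring_1 \<Rightarrow> 'b::comm_ring_1"
  assumes "\<And>a b. f (a + b) = f a + f b" shows "f 0 = 0"
proof -
  have "f 0 = f 0 + f 0" using assms[of 0 0] by simp
  thus ?thesis by simp
qed

lemma map_poly_hom_add:
  fixes f :: "'a::comm_ring_1 \<Rightarrow> 'b::comm_ring_1"
  assumes "\<And>a b. f (a + b) = f a + f b"
  shows "map_poly f (P + Q) = map_poly f P + map_poly f Q"
  using hom0[of f, OF assms] by (intro poly_eqI) (simp add: coeff_map_poly assms)

lemma map_poly_hom_mult: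
  fixes f :: "'a::comm_ring_1 \<Rightarrow> 'b::comm_ring_1"
  assumes add: "\<And>a b. f (a + b) = f a + f b" and mul: "\<And>a b. f (a * b) = f a * f b"
  shows "map_poly f (P * Q) = map_poly f P * map_poly f Q"
proof (induction P)
  case 0 then show ?case by simp
next
  case (pCons a P)
  have f0: "f 0 = 0" by (rule hom0[OF add])
  have "map_poly f (pCons a P * Q) = map_poly f (smult a Q) + map_poly f (pCons 0 (P * Q))"
    by (simp add: map_poly_hom_add[OF add])
  also have "\<dots> = smult (f a) (map_poly f Q) + pCons 0 (map_poly f P * map_poly f Q)"
    using pCons.IH f0 by (simp add: map_poly_smult mul map_poly_pCons)
  also have "\<dots> = map_poly f (pCons a P) * map_poly f Q"
    using f0 by (simp add: map_poly_pCons)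
  finally show ?case .
qed

lemma map_poly_hom_power:
  fixes f :: "'a::comm_ring_1 \<Rightarrow> 'b::comm_ring_1"
  assumes add: "\<And>a b. f (a + b) = f a + f b" and mul: "\<And>a b. f (a * b) = f a * f b"
    and one: "f 1 = 1"
  shows "map_poly f (P ^ n) = map_poly f P ^ n"
  by (induction n) (simp_all add: one map_poly_hom_mult[OF add mul])

lemma map_poly_hom_sum:
  fixes f :: "'a::comm_ring_1 \<Rightarrow> 'b::comm_ring_1"
  assumes add: "\<And>a b. f (a + b) = f a + f b"
  shows "map_poly f (\<Sum>i\<in>A. g i) = (\<Sum>i\<in>A. map_poly f (g i))"
  by (induction A rule: infinite_finite_induct) (simp_all add: map_poly_hom_add[OF add])


lemma coeff_sq_power:
  "coeff ([:1,0,1:]^i :: 'a::comm_ring_1 poly) r = (if even r then of_nat (i choose (r div 2)) else 0)"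
proof -
  have e: "[:1,0,1:] = (monom (1::'a) 2 + 1)" by (simp add: monom_altdef power2_eq_square one_pCons)
  have "[:1,0,1:]^i = (\<Sum>k\<le>i. of_nat (i choose k) * monom (1::'a) 2 ^ k * 1 ^ (i - k))"
    unfolding e by (rule binomial_ring)
  also have "\<dots> = (\<Sum>k\<le>i. monom (of_nat (i choose k)) (2*k))"
    by (intro sum.cong refl) (simp add: monom_power of_nat_poly smult_monom mult.commute)
  finally have "coeff ([:1,0,1:]^i :: 'a poly) r = (\<Sum>k\<le>i. if 2*k = r then of_nat (i choose k) else 0)"
    by (simp add: coeff_sum coeff_monom)
  also have "\<dots> = (\<Sum>k\<le>i. if k = r div 2 then (if even r then of_nat (i choose k) else 0) else 0)"
    by (intro sum.cong refl) auto
  also have "\<dots> = (if even r then of_nat (i choose (r div 2)) else 0)"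
    by (simp add: sum.delta binomial_eq_0)
  finally show ?thesis .
qed


lemma vand_neg:
  assumes "k + 1 \<le> M"
  shows "(\<Sum>j\<le>q. (-1)^j * int ((k+j) choose j) * int (M choose (q-j))) = int ((M-k-1) choose q)"
proof -
  have neg: "((- 1 - real k) gchoose j) = (-1)^j * of_nat ((k+j) choose j)" for j
  proof -
    have "((- 1 - real k) gchoose j) = (-1)^j * ((of_nat j - (- 1 - real k) - 1) gchoose j)"
      by (rule gbinomial_negated_upper)
    also have "(of_nat j - (- 1 - real k) - 1 :: real) = of_nat (k+j)" by simp
    finally show ?thesis by (simp add: binomial_gbinomial)
  qed
  have "real_of_int (\<Sum>j\<le>q. (-1)^j * int ((k+j) choose j) * int (M choose (q-j)))
      = (\<Sum>j=0..q. ((- 1 - real k) gchoose j) * (of_nat M gchoose (q - j)))"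
    by (simp add: neg binomial_gbinomial atLeast0AtMost mult.assoc)
  also have "\<dots> = ((- 1 - real k) + of_nat M) gchoose q" by (rule gbinomial_Vandermonde)
  also have "((- 1 - real k) + of_nat M :: real) = of_nat (M - k - 1)" using assms by simp
  also have "(of_nat (M - k - 1) :: real) gchoose q = of_int (int ((M-k-1) choose q))"
    by (simp add: binomial_gbinomial)
  finally show ?thesis by (simp only: of_int_eq_iff)
qed

lemma trunc_sum:
  assumes "r \<le> d"
  shows "(\<Sum>j\<le>d. w j * int ((c + r) choose (c + j))) = (\<Sum>j\<le>r. w j * int ((c+r) choose (r - j)))"
proof -
  have "(\<Sum>j\<le>d. w j * int ((c + r) choose (c + j))) = (\<Sum>j\<le>r. w j * int ((c + r) choose (c + j)))"
    using assms by (intro sum.mono_neutral_right) (auto simp: binomial_eq_0)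
  also have "\<dots> = (\<Sum>j\<le>r. w j * int ((c+r) choose (r - j)))"
  proof (intro sum.cong refl)
    fix j assume "j \<in> {..r}"
    then have "c + j \<le> c + r" by simp
    then have "(c + r) choose (c + j) = (c + r) choose (c + r - (c + j))" by (rule binomial_symmetric)
    then show "w j * int ((c + r) choose (c + j)) = w j * int ((c+r) choose (r - j))" by simp
  qed
  finally show ?thesis .
qed

definition gg :: "nat \<Rightarrow> nat \<Rightarrow> int" where
  "gg i r = (if even r then int (i choose (r div 2)) else 0)"

lemma S_lemma:
  assumes "i \<le> d"
  shows "(\<Sum>j\<le>d. (-1)^j * int ((k+j) choose j) * (gg i (i+k+2*j) - gg i (i+k+2*j+2)))
         = (if i = k then 1 else 0)"
proof (cases "odd (i + k)")
  case True
  then show ?thesis by (auto simp: gg_def)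
next
  case False
  show ?thesis
  proof (cases "i < k")
    case True
    have "gg i (i+k+2*j) = 0" "gg i (i+k+2*j+2) = 0" for j
    proof -
      have "i < (i+k+2*j) div 2" using True False by presburger
      moreover have "i < (i+k+2*j+2) div 2" using True False by presburger
      ultimately show "gg i (i+k+2*j) = 0" "gg i (i+k+2*j+2) = 0" by (auto simp: gg_def binomial_eq_0)
    qed
    then show ?thesis using True by simp
  next
    case ik: False
    then obtain r where r: "i = k + 2*r" using False
      by (metis add_diff_inverse_nat dvd_add_left_iff dvd_def even_add odd_add)
    show ?thesis
    proof (cases "r = 0")
      case True
      have "(-1)^j * int ((k+j) choose j) * (gg i (i+k+2*j) - gg i (i+k+2*j+2)) = (if j = 0 then 1 else 0)" for j
        using True r by (auto simp: gg_def binomial_eq_0)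
      then show ?thesis using True r by (simp add: sum.delta)
    next
      case False
      let ?w = "\<lambda>j. (-1)^j * int ((k+j) choose j)"
      have g1: "gg i (i+k+2*j) = int ((k + r + r) choose (k + r + j))" for j
      proof -
        have "i+k+2*j = 2*(k+r+j)" "i = k + r + r" using r by simp_all
        then show ?thesis by (simp only: gg_def) simp
      qed
      have g2: "gg i (i+k+2*j+2) = int (i choose (Suc (k + r) + j))" for j
      proof -
        have "(i+k+2*j+2) = 2 * (Suc (k + r) + j)" using r by simp
        then show ?thesis by (simp only: gg_def) simp
      qed
      have ieq: "Suc (k + r) + (r - 1) = i" using r False by simp
      have rd: "r \<le> d" "r - 1 \<le> d" using assms r by auto
      have A: "(\<Sum>j\<le>d. ?w j * gg i (i+k+2*j)) = int ((2*r - 1) choose r)"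
      proof -
        have "(\<Sum>j\<le>d. ?w j * gg i (i+k+2*j)) = (\<Sum>j\<le>d. ?w j * int (((k + r) + r) choose ((k + r) + j)))"
          by (simp add: g1)
        also have "\<dots> = (\<Sum>j\<le>r. ?w j * int (((k + r) + r) choose (r - j)))"
          by (rule trunc_sum[OF rd(1)])
        also have "\<dots> = int ((k + r + r - k - 1) choose r)"
          by (subst vand_neg[symmetric]) (use False in \<open>auto simp: mult.assoc\<close>)
        finally show ?thesis by (simp add: mult_2)
      qed
      have B: "(\<Sum>j\<le>d. ?w j * gg i (i+k+2*j+2)) = int ((2*r - 1) choose (r - 1))"
      proof -
        have "(\<Sum>j\<le>d. ?w j * gg i (i+k+2*j+2)) = (\<Sum>j\<le>d. ?w j * int (i choose (Suc (k + r) + j)))"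
          by (intro sum.cong refl) (simp only: g2)
        also have "\<dots> = (\<Sum>j\<le>r - 1. ?w j * int (i choose (r - 1 - j)))"
          by (rule trunc_sum[OF rd(2), of _ "Suc (k + r)", unfolded ieq])
        also have "\<dots> = int ((i - k - 1) choose (r - 1))"
          by (subst vand_neg[symmetric]) (use False r in \<open>auto simp: mult.assoc\<close>)
        finally show ?thesis using False r by (simp add: mult_2)
      qed
      have C: "(2*r - 1) choose r = (2*r - 1) choose (r - 1)"
        using binomial_symmetric[of r "2*r - 1"] False by simp
      have "(\<Sum>j\<le>d. ?w j * (gg i (i+k+2*j) - gg i (i+k+2*j+2)))
          = (\<Sum>j\<le>d. ?w j * gg i (i+k+2*j)) - (\<Sum>j\<le>d. ?w j * gg i (i+k+2*j+2))"
        by (simp add: right_diff_distrib sum_subtractf)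
      also have "\<dots> = 0" using A B C by simp
      finally show ?thesis using False r by simp
    qed
  qed
qed


definition Hd :: "nat \<Rightarrow> 'a::comm_ring_1 poly \<Rightarrow> 'a poly" where
  "Hd d f = (\<Sum>i\<le>d. smult (coeff f i) ([:1,0,1:]^i * monom 1 (d - i)))"

lemma coeff_Hd:
  "coeff (Hd d f) (d + e) = (\<Sum>i\<le>d. coeff f i * (if even (i+e) then of_nat (i choose ((i+e) div 2)) else 0))"
  unfolding Hd_def coeff_sum coeff_smult
proof (intro sum.cong refl)
  fix i assume "i \<in> {..d}"
  then have "d + e = (i + e) + (d - i)" by simp
  then have cc: "coeff ([:1,0,1:]^i * monom 1 (d - i)) (d + e) = coeff ([:1,0,1:]^i) (i+e)"
    by (simp only: mult.commute[of "[:1,0,1:]^i"] coeff_monom_mult) (simp add: add.commute)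
  then show "coeff f i * coeff ([:1,0,1:]^i * monom 1 (d - i)) (d + e) =
    coeff f i * (if even (i+e) then of_nat (i choose ((i+e) div 2)) else 0)"
    by (subst cc) (simp add: coeff_sq_power)
qed

lemma coeff_Hd_int:
  "coeff (Hd d (f::int poly)) (d + e) = (\<Sum>i\<le>d. coeff f i * gg i (i + e))"
  by (simp add: coeff_Hd gg_def)

lemma inversion:
  fixes f :: "int poly"
  assumes "degree f \<le> d"
  shows "coeff f k = (\<Sum>j\<le>d. (-1)^j * int ((k+j) choose j) *
            (coeff (Hd d f) (d + (k + 2*j)) - coeff (Hd d f) (d + (k + 2*j + 2))))"
proof -
  have "(\<Sum>j\<le>d. (-1)^j * int ((k+j) choose j) *
            (coeff (Hd d f) (d + (k + 2*j)) - coeff (Hd d f) (d + (k + 2*j + 2))))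
      = (\<Sum>j\<le>d. \<Sum>i\<le>d. coeff f i * ((-1)^j * int ((k+j) choose j) * (gg i (i+k+2*j) - gg i (i+k+2*j+2))))"
  proof (intro sum.cong refl)
    fix j
    have h1: "coeff (Hd d f) (d + (k + 2*j)) = (\<Sum>i\<le>d. coeff f i * gg i (i + k + 2*j))"
      using coeff_Hd_int[of d f "k+2*j"] by (simp add: add.assoc)
    have h2: "coeff (Hd d f) (d + (k + 2*j + 2)) = (\<Sum>i\<le>d. coeff f i * gg i (i + k + 2*j + 2))"
      using coeff_Hd_int[of d f "k+2*j+2"] by (simp add: add.assoc)
    show "(-1)^j * int ((k+j) choose j) *
            (coeff (Hd d f) (d + (k + 2*j)) - coeff (Hd d f) (d + (k + 2*j + 2)))
      = (\<Sum>i\<le>d. coeff f i * ((-1)^j * int ((k+j) choose j) * (gg i (i+k+2*j) - gg i (i+k+2*j+2))))"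
      unfolding h1 h2 by (simp add: sum_subtractf[symmetric] sum_distrib_left algebra_simps)
  qed
  also have "\<dots> = (\<Sum>i\<le>d. coeff f i * (\<Sum>j\<le>d. (-1)^j * int ((k+j) choose j) * (gg i (i+k+2*j) - gg i (i+k+2*j+2))))"
    by (subst sum.swap) (simp add: sum_distrib_left)
  also have "\<dots> = (\<Sum>i\<le>d. coeff f i * (if i = k then 1 else 0))"
  proof (intro sum.cong refl)
    fix i assume "i \<in> {..d}"
    then show "coeff f i * (\<Sum>j\<le>d. (-1)^j * int ((k+j) choose j) * (gg i (i+k+2*j) - gg i (i+k+2*j+2)))
      = coeff f i * (if i = k then 1 else 0)" using S_lemma[of i d k] by simp
  qed
  also have "\<dots> = coeff f k"
  proof -
    have "(\<Sum>i\<le>d. coeff f i * (if i = k then 1 else 0)) = (\<Sum>i\<le>d. if i = k then coeff f k else 0)"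
      by (intro sum.cong refl) auto
    also have "\<dots> = coeff f k" using assms by (auto simp: sum.delta coeff_eq_0)
    finally show ?thesis .
  qed
  finally show ?thesis by simp
qed


lemma poly_eq_nonzero:
  fixes A B :: "real poly"
  assumes "\<And>u. u \<noteq> 0 \<Longrightarrow> poly A u = poly B u"
  shows "A = B"
proof (rule ccontr)
  assume "A \<noteq> B"
  then have "A - B \<noteq> 0" by simp
  then have "finite {x. poly (A - B) x = 0}" by (rule poly_roots_finite)
  moreover have "UNIV - {0} \<subseteq> {x. poly (A - B) x = 0}" using assms by auto
  ultimately have "finite (UNIV - {0::real})" by (rule finite_subset[rotated])
  then show False using infinite_UNIV_char_0 by auto
qed

lemma poly_Hd_real:
  fixes f :: "real poly"
  assumes "degree f \<le> d" "u \<noteq> 0"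
  shows "poly (Hd d f) u = u^d * poly f ((u^2+1)/u)"
proof -
  have "poly (Hd d f) u = (\<Sum>i\<le>d. coeff f i * ((1 + u*u)^i * u^(d-i)))"
    by (simp add: Hd_def poly_sum poly_monom)
  also have "\<dots> = (\<Sum>i\<le>d. u^d * (coeff f i * ((u^2+1)/u)^i))"
  proof (intro sum.cong refl)
    fix i assume "i \<in> {..d}"
    then have "u^d = u^i * u^(d-i)" by (simp add: power_add[symmetric])
    then show "coeff f i * ((1 + u*u)^i * u^(d-i)) = u^d * (coeff f i * ((u^2+1)/u)^i)"
      using assms(2) by (simp add: power_divide power2_eq_square field_simps)
  qed
  also have "\<dots> = u^d * (\<Sum>i\<le>d. coeff f i * ((u^2+1)/u)^i)"
    by (simp add: sum_distrib_left)
  also have "(\<Sum>i\<le>d. coeff f i * ((u^2+1)/u)^i) = poly f ((u^2+1)/u)"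
    unfolding poly_altdef using assms(1)
    by (intro sum.mono_neutral_right) (auto simp: coeff_eq_0)
  finally show ?thesis .
qed

lemma of_int_add_hom: "(of_int (a + b) :: 'a::comm_ring_1) = of_int a + of_int b" by simp
lemma of_int_mult_hom: "(of_int (a * b) :: 'a::comm_ring_1) = of_int a * of_int b" by simp

lemma map_Hd_of_int:
  "map_poly (of_int :: int \<Rightarrow> 'a::comm_ring_1) (Hd d f) = Hd d (map_poly of_int f)"
  unfolding Hd_def
  by (simp add: map_poly_hom_sum[OF of_int_add_hom] map_poly_smult map_poly_hom_mult[OF of_int_add_hom of_int_mult_hom]
      map_poly_hom_power[OF of_int_add_hom of_int_mult_hom] map_poly_monom map_poly_pCons coeff_map_poly)

definition hpol :: "int poly" where "hpol = [:0,5,0,-5,0,1:]"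

lemma Hd_hpol:
  "Hd (5*m) (hpol^m) = (1 + monom 1 10)^m"
proof -
  let ?hr = "map_poly (of_int :: int \<Rightarrow> real) hpol"
  have hr: "?hr = [:0,5,0,-5,0,1:]" by (simp add: hpol_def map_poly_pCons)
  have degh: "degree (?hr ^ m) \<le> 5*m"
  proof -
    have "degree (?hr ^ m) \<le> degree ?hr * m" by (rule degree_power_le)
    also have "degree ?hr = 5" unfolding hr by simp
    finally show ?thesis by simp
  qed
  have "map_poly (of_int :: int \<Rightarrow> real) (Hd (5*m) (hpol^m)) = map_poly of_int ((1 + monom 1 10)^m)"
  proof -
    have "map_poly (of_int :: int \<Rightarrow> real) (Hd (5*m) (hpol^m)) = Hd (5*m) (?hr ^ m)"
      by (simp add: map_Hd_of_int map_poly_hom_power[OF of_int_add_hom of_int_mult_hom])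
    also have "\<dots> = (1 + monom 1 10)^m"
    proof (rule poly_eq_nonzero)
      fix u :: real assume u: "u \<noteq> 0"
      have key: "u^5 * poly ?hr ((u^2+1)/u) = u^10 + 1"
        unfolding hr using u by (simp add: field_simps) algebra
      have "poly (Hd (5*m) (?hr ^ m)) u = u^(5*m) * (poly ?hr ((u^2+1)/u))^m"
        using poly_Hd_real[OF degh u] by simp
      also have "\<dots> = (u^5 * poly ?hr ((u^2+1)/u))^m" by (simp add: power_mult power_mult_distrib)
      also have "\<dots> = poly ((1 + monom 1 10)^m) u" by (subst key) (simp add: poly_monom add.commute)
      finally show "poly (Hd (5*m) (?hr ^ m)) u = poly ((1 + monom 1 10)^m) u" .
    qed
    also have "\<dots> = map_poly of_int ((1 + monom 1 10)^m)"
      by (simp add: map_poly_hom_power[OF of_int_add_hom of_int_mult_hom] map_poly_hom_add[OF of_int_add_hom] map_poly_monom)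
    finally show ?thesis .
  qed
  then show ?thesis
    by (metis (no_types) coeff_map_poly of_int_0 of_int_eq_iff poly_eqI)
qed


lemma coeff_Ppow:
  assumes "\<not> 10 dvd e \<or> 10 * m < e"
  shows "coeff ((1 + monom (1::int) 10)^m) e = 0"
proof -
  have "(1 + monom (1::int) 10)^m = (monom 1 10 + 1)^m" by (simp add: add.commute)
  also have "\<dots> = (\<Sum>l\<le>m. of_nat (m choose l) * monom (1::int) 10 ^ l * 1 ^ (m - l))"
    by (rule binomial_ring)
  also have "\<dots> = (\<Sum>l\<le>m. monom (of_nat (m choose l)) (10*l))"
    by (intro sum.cong refl) (simp add: monom_power of_nat_poly smult_monom mult.commute)
  finally have "coeff ((1 + monom (1::int) 10)^m) e = (\<Sum>l\<le>m. if 10*l = e then of_nat (m choose l) else 0)"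
    by (simp add: coeff_sum coeff_monom)
  also have "\<dots> = 0" using assms by (intro sum.neutral) auto
  finally show ?thesis .
qed

lemma dvd_choose1:
  assumes "prime p" "a < b" "b < p"
  shows "p dvd ((p + a) choose b)"
proof -
  have "(p + a) choose b = (\<Sum>i\<le>b. (p choose i) * (a choose (b - i)))"
    by (rule vandermonde[symmetric])
  also have "p dvd \<dots>"
  proof (rule dvd_sum)
    fix i assume i: "i \<in> {..b}"
    show "p dvd (p choose i) * (a choose (b - i))"
    proof (cases "i = 0")
      case True then show ?thesis using assms by (simp add: binomial_eq_0)
    next
      case False
      then have "p dvd (p choose i)" using i assms
        by (intro dvd_choose_prime) (auto simp: prime_gt_0_nat)
      then show ?thesis by simp
    qed
  qed
  finally show ?thesis .
qed

lemma dvd_choose2: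
  assumes "prime p" "a < b" "b < p"
  shows "p dvd ((2*p + a) choose b)"
proof -
  have "(2*p + a) choose b = (p + (p + a)) choose b" by (simp add: mult_2 add.assoc)
  also have "\<dots> = (\<Sum>i\<le>b. (p choose i) * ((p + a) choose (b - i)))"
    by (rule vandermonde[symmetric])
  also have "p dvd \<dots>"
  proof (rule dvd_sum)
    fix i assume i: "i \<in> {..b}"
    show "p dvd (p choose i) * ((p + a) choose (b - i))"
    proof (cases "i = 0")
      case True then show ?thesis using assms dvd_choose1[OF assms] by simp
    next
      case False
      then have "p dvd (p choose i)" using i assms
        by (intro dvd_choose_prime) (auto simp: prime_gt_0_nat)
      then show ?thesis by simp
    qed
  qed
  finally show ?thesis .
qed

lemma core_criterion:
  fixes p m k jz :: nat
  assumes H1: "\<And>j. j < jz \<Longrightarrow> \<not> 5 dvd (k + 2*j) \<and> \<not> 5 dvd (k + 2*j + 2)"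
    and H2: "\<And>j. jz \<le> j \<Longrightarrow> j < p \<Longrightarrow> p dvd ((k + j) choose j)"
    and H3: "\<And>j. p \<le> j \<Longrightarrow> 5*m < k + 2*j"
  shows "int p dvd coeff (hpol^m) k"
proof -
  have deg: "degree (hpol^m) \<le> 5*m"
  proof -
    have "degree (hpol ^ m) \<le> degree hpol * m" by (rule degree_power_le)
    also have "degree hpol = 5" by (simp add: hpol_def)
    finally show ?thesis by simp
  qed
  let ?P = "coeff ((1 + monom (1::int) 10)^m)"
  have "coeff (hpol^m) k = (\<Sum>j\<le>5*m. (-1)^j * int ((k+j) choose j) *
            (?P (5*m + (k + 2*j)) - ?P (5*m + (k + 2*j + 2))))"
    using inversion[OF deg, of k] by (simp add: Hd_hpol)
  also have "int p dvd \<dots>"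
  proof (rule dvd_sum)
    fix j assume "j \<in> {..5*m}"
    show "int p dvd (-1)^j * int ((k+j) choose j) * (?P (5*m + (k + 2*j)) - ?P (5*m + (k + 2*j + 2)))"
    proof (cases "j < jz")
      case True
      then have "\<not> 5 dvd (k + 2*j)" "\<not> 5 dvd (k + 2*j + 2)" using H1 by auto
      then have "\<not> 10 dvd (5*m + (k + 2*j))" "\<not> 10 dvd (5*m + (k + 2*j + 2))" by presburger+
      then have "?P (5*m + (k + 2*j)) = 0" "?P (5*m + (k + 2*j + 2)) = 0"
        by (auto intro: coeff_Ppow)
      then show ?thesis by simp
    next
      case False
      show ?thesis
      proof (cases "j < p")
        case True
        then have "p dvd ((k+j) choose j)" using H2 False by simp
        then have "int p dvd int ((k+j) choose j)" by simp
        then show ?thesis by simp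
      next
        case jp: False
        then have "5*m < k + 2*j" using H3 by simp
        then have "?P (5*m + (k + 2*j)) = 0" "?P (5*m + (k + 2*j + 2)) = 0"
          by (auto intro: coeff_Ppow)
        then show ?thesis by simp
      qed
    qed
  qed
  finally show ?thesis .
qed

lemma core_vanish:
  fixes p m k :: nat
  assumes p: "prime p" "p \<noteq> 2" "p \<noteq> 5" and m: "2*m \<le> p - 1"
    and k: "(p mod 5 \<in> {2,3} \<and> (k = p - 1 \<or> k = 2*p - 2)) \<or> (p mod 5 \<in> {1,4} \<and> (k = p - 2 \<or> k = 2*p - 1))"
  shows "int p dvd coeff (hpol^m) k"
proof -
  have p3: "p \<ge> 3" using p prime_ge_2_nat[OF p(1)] by linarith
  have H3: "5*m < k + 2*j" if "p \<le> j" for j using m p3 k that by auto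
  from k consider (a) "p mod 5 = 2 \<or> p mod 5 = 3" "k = p - 1" | (b) "p mod 5 = 2 \<or> p mod 5 = 3" "k = 2*p - 2"
    | (c) "p mod 5 = 1 \<or> p mod 5 = 4" "k = p - 2" | (d) "p mod 5 = 1 \<or> p mod 5 = 4" "k = 2*p - 1" by blast
  then show ?thesis
  proof cases
    case a
    show ?thesis
    proof (rule core_criterion[where jz=1, OF _ _ H3])
      fix j :: nat assume "j < 1"
      then have "j = 0" by simp
      moreover have "\<not> 5 dvd (p - 1) \<and> \<not> 5 dvd (p - 1 + 2)" using a(1) p3 by presburger
      ultimately show "\<not> 5 dvd (k + 2*j) \<and> \<not> 5 dvd (k + 2*j + 2)" using a(2) by simp
    next
      fix j assume j: "1 \<le> j" "j < p"
      have "(k + j) = p + (j - 1)" using a j p3 by simp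
      then show "p dvd ((k + j) choose j)" using dvd_choose1[OF p(1), of "j-1" j] j by simp
    qed
  next
    case b
    show ?thesis
    proof (rule core_criterion[where jz=2, OF _ _ H3])
      fix j :: nat assume "j < 2"
      then have "j = 0 \<or> j = 1" by auto
      moreover have "\<not> 5 dvd (2*p - 2) \<and> \<not> 5 dvd (2*p - 2 + 2) \<and> \<not> 5 dvd (2*p - 2 + 2 + 2)" using b(1) p3 by presburger
      ultimately show "\<not> 5 dvd (k + 2*j) \<and> \<not> 5 dvd (k + 2*j + 2)" using b(2) by auto
    next
      fix j assume j: "2 \<le> j" "j < p"
      have "(k + j) = 2*p + (j - 2)" using b j p3 by simp
      then show "p dvd ((k + j) choose j)" using dvd_choose2[OF p(1), of "j-2" j] j by simp
    qed
  next
    case c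
    show ?thesis
    proof (rule core_criterion[where jz=2, OF _ _ H3])
      fix j :: nat assume "j < 2"
      then have "j = 0 \<or> j = 1" by auto
      moreover have "\<not> 5 dvd (p - 2) \<and> \<not> 5 dvd (p - 2 + 2) \<and> \<not> 5 dvd (p - 2 + 2 + 2)" using c(1) p3 by presburger
      ultimately show "\<not> 5 dvd (k + 2*j) \<and> \<not> 5 dvd (k + 2*j + 2)" using c(2) by auto
    next
      fix j assume j: "2 \<le> j" "j < p"
      have "(k + j) = p + (j - 2)" using c j p3 by simp
      then show "p dvd ((k + j) choose j)" using dvd_choose1[OF p(1), of "j-2" j] j by simp
    qed
  next
    case d
    show ?thesis
    proof (rule core_criterion[where jz=1, OF _ _ H3])
      fix j :: nat assume "j < 1"
      then have "j = 0" by simp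
      moreover have "\<not> 5 dvd (2*p - 1) \<and> \<not> 5 dvd (2*p - 1 + 2)" using d(1) p3 by presburger
      ultimately show "\<not> 5 dvd (k + 2*j) \<and> \<not> 5 dvd (k + 2*j + 2)" using d(2) by simp
    next
      fix j assume j: "1 \<le> j" "j < p"
      have "(k + j) = 2*p + (j - 1)" using d j p3 by simp
      then show "p dvd ((k + j) choose j)" using dvd_choose2[OF p(1), of "j-1" j] j by simp
    qed
  qed
qed


lemma Fp_alt: "x \<in> Fp_poly_at t \<longleftrightarrow> (\<exists>P. x = poly (map_poly of_int P) t)"
  by (auto simp: Fp_poly_at_def)

lemma Fp_add: "a \<in> Fp_poly_at t \<Longrightarrow> b \<in> Fp_poly_at t \<Longrightarrow> a + b \<in> Fp_poly_at t"
  unfolding Fp_alt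
proof (elim exE)
  fix P Q assume "a = poly (map_poly of_int P) t" "b = poly (map_poly of_int Q) t"
  then show "\<exists>R. a + b = poly (map_poly of_int R) t"
    by (intro exI[of _ "P + Q"]) (simp add: map_poly_hom_add[OF of_int_add_hom])
qed

lemma Fp_mult: "a \<in> Fp_poly_at t \<Longrightarrow> b \<in> Fp_poly_at t \<Longrightarrow> a * b \<in> Fp_poly_at t"
  unfolding Fp_alt
proof (elim exE)
  fix P Q assume "a = poly (map_poly of_int P) t" "b = poly (map_poly of_int Q) t"
  then show "\<exists>R. a * b = poly (map_poly of_int R) t"
    by (intro exI[of _ "P * Q"]) (simp add: map_poly_hom_mult[OF of_int_add_hom of_int_mult_hom])
qed

lemma Fp_of_int: "(of_int c :: 'k::field) \<in> Fp_poly_at t"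
  unfolding Fp_alt by (rule exI[of _ "[:c:]"]) (simp add: map_poly_pCons)

lemma Fp_t: "(t :: 'k::field) \<in> Fp_poly_at t"
  unfolding Fp_alt by (rule exI[of _ "[:0,1:]"]) (simp add: map_poly_pCons)

lemma Fp_sum: "(\<And>i. i \<in> A \<Longrightarrow> f i \<in> Fp_poly_at t) \<Longrightarrow> sum f A \<in> Fp_poly_at t"
  by (induction A rule: infinite_finite_induct) (auto intro: Fp_add simp: Fp_of_int[of 0, simplified])

lemma Fp_power: "a \<in> Fp_poly_at t \<Longrightarrow> a ^ n \<in> Fp_poly_at t"
  by (induction n) (auto intro: Fp_mult simp: Fp_of_int[of 1, simplified])

lemma Fp_of_nat: "(of_nat c :: 'k::field) \<in> Fp_poly_at t"
  using Fp_of_int[of "int c" t] by simp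

lemma F_split:
  "[:2 - 4*t, 5, 0, -5, 0, 1:] = [:2 - 4*t:] + map_poly (of_int :: int \<Rightarrow> 'k::field) hpol"
  by (simp add: hpol_def map_poly_pCons)

lemma coeff_Fpow:
  fixes t :: "'k::field"
  shows "coeff ([:2 - 4*t, 5, 0, -5, 0, 1:] ^ n) k =
    (\<Sum>m\<le>n. of_nat (n choose m) * (2 - 4*t)^(n-m) * of_int (coeff (hpol^m) k))"
proof -
  have "[:2 - 4*t, 5, 0, -5, 0, 1:] ^ n = (map_poly of_int hpol + [:2 - 4*t:]) ^ n"
    by (simp add: F_split add.commute)
  also have "\<dots> = (\<Sum>m\<le>n. of_nat (n choose m) * map_poly of_int hpol ^ m * [:2 - 4*t:] ^ (n - m))"
    by (rule binomial_ring)
  also have "\<dots> = (\<Sum>m\<le>n. smult (of_nat (n choose m) * (2 - 4*t)^(n-m)) (map_poly of_int (hpol ^ m)))"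
  proof (intro sum.cong refl)
    fix m
    have "of_nat (n choose m) * map_poly of_int hpol ^ m * [:2 - 4*t:] ^ (n - m)
        = [:of_nat (n choose m):] * ([:(2 - 4*t)^(n-m):] * map_poly of_int (hpol ^ m))"
      by (simp add: map_poly_hom_power[OF of_int_add_hom of_int_mult_hom] of_nat_poly poly_const_pow mult_ac)
    also have "\<dots> = smult (of_nat (n choose m) * (2 - 4*t)^(n-m)) (map_poly of_int (hpol ^ m))"
      by (simp add: mult.commute)
    finally show "of_nat (n choose m) * map_poly of_int hpol ^ m * [:2 - 4*t:] ^ (n - m)
        = smult (of_nat (n choose m) * (2 - 4*t)^(n-m)) (map_poly of_int (hpol ^ m))" .
  qed
  finally show ?thesis
    by (simp add: coeff_sum coeff_map_poly mult.assoc)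
qed

lemma coeff_Fpow_Fp:
  fixes t :: "'k::field"
  shows "coeff ([:2 - 4*t, 5, 0, -5, 0, 1:] ^ n) k \<in> Fp_poly_at t"
  unfolding coeff_Fpow
proof (intro Fp_sum Fp_mult Fp_power Fp_of_nat Fp_of_int)
  have "2 - 4 * t = of_int 2 + of_int (-4) * t" by simp
  also have "\<dots> \<in> Fp_poly_at t" by (intro Fp_add Fp_mult Fp_of_int Fp_t)
  finally show "2 - 4 * t \<in> Fp_poly_at t" .
qed

lemma coeff_Fpow_zero:
  fixes t :: "'k::field"
  assumes "CHAR('k) = p" "\<And>m. m \<le> n \<Longrightarrow> int p dvd coeff (hpol^m) k"
  shows "coeff ([:2 - 4*t, 5, 0, -5, 0, 1:] ^ n) k = 0"
  unfolding coeff_Fpow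
proof (intro sum.neutral ballI)
  fix m assume "m \<in> {..n}"
  then obtain w where "coeff (hpol^m) k = int p * w" using assms(2) by fastforce
  then have "(of_int (coeff (hpol^m) k) :: 'k) = of_nat p * of_int w" by simp
  also have "\<dots> = 0" using assms(1) by (metis mult_zero_left of_nat_CHAR)
  finally show "of_nat (n choose m) * (2 - 4*t)^(n-m) * of_int (coeff (hpol^m) k) = 0" by simp
qed


locale hfs =
  fixes \<iota> :: "'k::field \<Rightarrow> 'L::field" and F :: "'k poly" and x y :: 'L and D :: "'L \<Rightarrow> 'L" and p :: nat
  assumes hyp: "is_hyperelliptic_function_field \<iota> F x y D"
    and charp: "CHAR('k) = p" and primep: "prime p" and p2: "p \<noteq> 2" and Fnz: "F \<noteq> 0"
begin

lemma hyp': "inj \<iota> \<and> \<iota> 1 = 1 \<and>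
     (\<forall>a b. \<iota> (a + b) = \<iota> a + \<iota> b) \<and> (\<forall>a b. \<iota> (a * b) = \<iota> a * \<iota> b) \<and>
     (\<forall>P. P \<noteq> 0 \<longrightarrow> poly (map_poly \<iota> P) x \<noteq> 0) \<and>
     y ^ 2 = poly (map_poly \<iota> F) x \<and>
     (\<forall>z. \<exists>P Q R. R \<noteq> 0 \<and>
        z = (poly (map_poly \<iota> P) x + poly (map_poly \<iota> Q) x * y) / poly (map_poly \<iota> R) x) \<and>
     (\<forall>a b. D (a + b) = D a + D b) \<and> (\<forall>a b. D (a * b) = a * D b + b * D a) \<and>
     (\<forall>c. D (\<iota> c) = 0) \<and> D x = 1"
  using hyp unfolding is_hyperelliptic_function_field_def .

lemma inj_i: "inj \<iota>" using hyp' by (elim conjE)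
lemma i1: "\<iota> 1 = 1" using hyp' by (elim conjE)
lemma i_add: "\<iota> (a + b) = \<iota> a + \<iota> b" using hyp' by (elim conjE) (erule allE)+
lemma i_mult: "\<iota> (a * b) = \<iota> a * \<iota> b" using hyp' by (elim conjE) (erule allE)+
lemma transc: "P \<noteq> 0 \<Longrightarrow> poly (map_poly \<iota> P) x \<noteq> 0" using hyp' by (elim conjE) (erule allE, erule mp)
lemma ysq: "y ^ 2 = poly (map_poly \<iota> F) x" using hyp' by (elim conjE)
lemma repr: "\<exists>P Q R. R \<noteq> 0 \<and> z = (poly (map_poly \<iota> P) x + poly (map_poly \<iota> Q) x * y) / poly (map_poly \<iota> R) x"
  using hyp' by (elim conjE) (erule allE)
lemma D_add: "D (u + v) = D u + D v" using hyp' by (elim conjE) (erule allE)+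
lemma D_mult: "D (u * v) = u * D v + v * D u" using hyp' by (elim conjE) (erule allE)+
lemma D_const: "D (\<iota> c) = 0" using hyp' by (elim conjE) (erule allE)
lemma D_x: "D x = 1" using hyp' by (elim conjE)

lemma i0: "\<iota> 0 = 0" by (rule hom0[of \<iota>]) (rule i_add)

lemma i_of_nat: "\<iota> (of_nat n) = of_nat n"
  by (induction n) (simp_all add: i0 i1 i_add)

lemma i_eq_0: "\<iota> a = 0 \<longleftrightarrow> a = 0"
  using injD[OF inj_i, of a 0] i0 by auto

lemma of_nat_L_0: "(of_nat n :: 'L) = 0 \<longleftrightarrow> p dvd n"
proof -
  have "(of_nat n :: 'L) = 0 \<longleftrightarrow> (of_nat n :: 'k) = 0" using i_of_nat[of n] i_eq_0[of "of_nat n"] by simp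
  also have "\<dots> \<longleftrightarrow> p dvd n" using charp by (simp add: of_nat_eq_0_iff_char_dvd)
  finally show ?thesis .
qed

lemma CHAR_L: "CHAR('L) = p"
  by (rule CHAR_eqI) (auto simp: of_nat_L_0)

lemma p_gt: "p > 2" using prime_ge_2_nat[OF primep] p2 by linarith

lemma frobL: "(u + v :: 'L) ^ p = u ^ p + v ^ p"
  by (rule freshmans_dream) (simp_all add: CHAR_L primep)

lemma frobK: "(u + v :: 'k) ^ p = u ^ p + v ^ p"
  by (rule freshmans_dream) (simp_all add: charp primep)

lemma frob_diffL: "(u - v :: 'L) ^ p = u ^ p - v ^ p"
  using frobL[of "u - v" v] by (simp add: algebra_simps)

lemma pow_p_inj: "(u :: 'L) ^ p = 0 \<Longrightarrow> u = 0" by simp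

lemma D0: "D 0 = 0"
proof -
  have "D 0 = D 0 + D 0" using D_add[of 0 0] by (simp only: add_0)
  then show ?thesis by (simp only: add_cancel_right_right)
qed
lemma D1: "D 1 = 0"
proof -
  have "D 1 = D 1 + D 1" using D_mult[of 1 1] by (simp only: mult_1)
  then show ?thesis by (simp only: add_cancel_right_right)
qed
lemma D_minus: "D (- u) = - D u"
proof -
  have "D u + D (- u) = 0" using D_add[of u "-u"] D0 by simp
  then show ?thesis by (simp add: eq_neg_iff_add_eq_0 add.commute)
qed
lemma D_diff: "D (u - v) = D u - D v" using D_add[of u "-v"] D_minus by simp
lemma D_of_nat: "D (of_nat n) = 0" using D_const[of "of_nat n"] i_of_nat by simp
lemma D_cmult: "D c = 0 \<Longrightarrow> D (c * u) = c * D u" by (simp add: D_mult)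
lemma D_multc: "D c = 0 \<Longrightarrow> D (u * c) = c * D u" by (simp add: D_mult)

lemma D_power: "D (u ^ k) = of_nat k * u ^ (k - 1) * D u"
proof (induction k)
  case 0 then show ?case by (simp add: D1)
next
  case (Suc k)
  show ?case
  proof (cases k)
    case 0 then show ?thesis by simp
  next
    case (Suc k')
    then show ?thesis using Suc.IH by (simp add: D_mult algebra_simps)
  qed
qed

lemma D_pow_p: "D (u ^ p) = 0"
  by (simp add: D_power of_nat_L_0)

lemma D_sum: "D (\<Sum>j\<in>A. f j) = (\<Sum>j\<in>A. D (f j))"
  by (induction A rule: infinite_finite_induct) (simp_all add: D0 D_add)

lemma D_inverse_const: "D c = 0 \<Longrightarrow> D (inverse c) = 0"
proof (cases "c = 0")
  case True then show ?thesis by (simp add: D0)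
next
  case False
  assume "D c = 0"
  have "0 = D (c * inverse c)" using False D1 by simp
  also have "\<dots> = c * D (inverse c)" using \<open>D c = 0\<close> by (simp add: D_mult)
  finally show ?thesis using False by simp
qed

definition E :: "'k poly \<Rightarrow> 'L" where "E P = poly (map_poly \<iota> P) x"

lemma E_add: "E (P + Q) = E P + E Q"
  unfolding E_def by (simp add: map_poly_hom_add[OF i_add])
lemma E_mult: "E (P * Q) = E P * E Q"
  unfolding E_def by (simp add: map_poly_hom_mult[OF i_add i_mult])
lemma E_power: "E (P ^ k) = E P ^ k"
  unfolding E_def by (simp add: map_poly_hom_power[OF i_add i_mult i1])
lemma E_pCons: "E (pCons a P) = \<iota> a + x * E P"
  unfolding E_def by (simp add: map_poly_pCons i0)
lemma E_0: "E 0 = 0" unfolding E_def by simp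
lemma E_monom: "E (monom c k) = \<iota> c * x ^ k"
  unfolding E_def by (simp add: map_poly_monom i0 poly_monom)
lemma E_nz: "P \<noteq> 0 \<Longrightarrow> E P \<noteq> 0" unfolding E_def by (rule transc)

lemma D_E: "D (E P) = E (pderiv P)"
proof (induction P)
  case 0 then show ?case by (simp add: E_0 D0)
next
  case (pCons a P)
  have "D (E (pCons a P)) = E P + x * D (E P)"
    by (simp add: E_pCons D_add D_const D_mult D_x)
  also have "\<dots> = E (pderiv (pCons a P))"
    by (simp add: pderiv_pCons E_add E_pCons pCons.IH i0)
  finally show ?case .
qed

lemma y_nz: "y \<noteq> 0"
proof
  assume "y = 0"
  then have "E F = 0" using ysq by (simp add: E_def)
  then show False using E_nz Fnz by blast
qed

end


context hfs
begin

lemma D_cxj: "D c = 0 \<Longrightarrow> D (c * x ^ j) = c * of_nat j * x ^ (j - 1)"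
  by (simp add: D_cmult D_power D_x)

lemma indep:
  "d < p \<Longrightarrow> (\<forall>j\<le>d. D (c j) = 0) \<Longrightarrow> (\<Sum>j\<le>d. c j * x ^ j) = 0 \<Longrightarrow> \<forall>j\<le>d. c j = 0"
proof (induction d arbitrary: c)
  case 0 then show ?case by simp
next
  case (Suc d)
  let ?c' = "\<lambda>j. of_nat (Suc j) * c (Suc j)"
  have "0 = D (\<Sum>j\<le>Suc d. c j * x ^ j)" using Suc.prems(3) D0 by simp
  also have "\<dots> = (\<Sum>j\<le>Suc d. c j * of_nat j * x ^ (j - 1))"
    unfolding D_sum using Suc.prems(2) by (intro sum.cong refl) (simp add: D_cxj)
  also have "\<dots> = (\<Sum>j\<le>d. ?c' j * x ^ j)"
    by (subst sum.atMost_Suc_shift) (simp add: mult_ac)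
  finally have s: "(\<Sum>j\<le>d. ?c' j * x ^ j) = 0" by simp
  have dc: "\<forall>j\<le>d. D (?c' j) = 0"
  proof (intro allI impI)
    fix j assume "j \<le> d"
    then have "D (c (Suc j)) = 0" using Suc.prems(2) by simp
    then show "D (?c' j) = 0" using D_cmult[OF D_of_nat[of "Suc j"]] by simp
  qed
  have "\<forall>j\<le>d. ?c' j = 0" by (rule Suc.IH) (use Suc.prems(1) dc s in auto)
  then have hi: "\<forall>j\<le>d. c (Suc j) = 0"
  proof (intro allI impI)
    fix j assume "j \<le> d" "\<forall>j\<le>d. ?c' j = 0"
    then have "of_nat (Suc j) * c (Suc j) = 0" by simp
    moreover have "(of_nat (Suc j) :: 'L) \<noteq> 0"
      unfolding of_nat_L_0 using \<open>j \<le> d\<close> Suc.prems(1) by (intro nat_dvd_not_less) auto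
    ultimately show "c (Suc j) = 0" by simp
  qed
  have "(\<Sum>j\<le>Suc d. c j * x ^ j) = c 0 + (\<Sum>j\<le>d. c (Suc j) * x ^ Suc j)"
    by (subst sum.atMost_Suc_shift) simp
  also have "\<dots> = c 0" using hi by simp
  finally have "c 0 = 0" using Suc.prems(3) by simp
  show ?case
  proof (intro allI impI)
    fix j assume "j \<le> Suc d"
    then show "c j = 0" using hi \<open>c 0 = 0\<close> by (cases j) auto
  qed
qed

definition V :: "'L set" where
  "V = {z. \<exists>b. (\<forall>j. D (b j) = 0) \<and> z = (\<Sum>j<p. b j * x ^ j)}"

lemma V_add: "u \<in> V \<Longrightarrow> v \<in> V \<Longrightarrow> u + v \<in> V"
  unfolding V_def
proof (elim CollectE exE conjE, intro CollectI)
  fix b b' assume "\<forall>j. D (b j) = 0" "u = (\<Sum>j<p. b j * x ^ j)" "\<forall>j. D (b' j) = 0" "v = (\<Sum>j<p. b' j * x ^ j)"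
  then show "\<exists>b''. (\<forall>j. D (b'' j) = 0) \<and> u + v = (\<Sum>j<p. b'' j * x ^ j)"
    by (intro exI[of _ "\<lambda>j. b j + b' j"]) (simp add: D_add sum.distrib algebra_simps)
qed

lemma V_cmult: "D c = 0 \<Longrightarrow> u \<in> V \<Longrightarrow> c * u \<in> V"
  unfolding V_def
proof (elim CollectE exE conjE, intro CollectI)
  fix b assume "D c = 0" "\<forall>j. D (b j) = 0" "u = (\<Sum>j<p. b j * x ^ j)"
  then show "\<exists>b''. (\<forall>j. D (b'' j) = 0) \<and> c * u = (\<Sum>j<p. b'' j * x ^ j)"
    by (intro exI[of _ "\<lambda>j. c * b j"]) (simp add: D_mult sum_distrib_left mult_ac)
qed

lemma V_E: "E P \<in> V"
proof (induction P)
  case 0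
  show ?case unfolding V_def E_0 by (intro CollectI exI[of _ "\<lambda>j. 0"]) (simp add: D0)
next
  case (pCons a P)
  obtain b where b: "\<forall>j. D (b j) = 0" "E P = (\<Sum>j<p. b j * x ^ j)"
    using pCons.IH unfolding V_def by blast
  obtain q where q: "p = Suc q" using p_gt by (cases p) auto
  define b' where "b' = (\<lambda>j. if j = 0 then \<iota> a + b q * x ^ p else b (j - 1))"
  have db': "\<forall>j. D (b' j) = 0"
    using b(1) by (simp add: b'_def D_add D_const D_mult D_pow_p)
  have "(\<Sum>j<p. b' j * x ^ j) = b' 0 + (\<Sum>j<q. b' (Suc j) * x ^ Suc j)"
    unfolding q by (subst sum.lessThan_Suc_shift) simp
  also have "\<dots> = \<iota> a + b q * x ^ p + (\<Sum>j<q. b j * x ^ Suc j)"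
    by (simp add: b'_def)
  also have "\<dots> = \<iota> a + x * (\<Sum>j<p. b j * x ^ j)"
  proof -
    have "x * (\<Sum>j<p. b j * x ^ j) = x * ((\<Sum>j<q. b j * x ^ j) + b q * x ^ q)"
      unfolding q by (simp only: sum.lessThan_Suc)
    also have "\<dots> = (\<Sum>j<q. x * (b j * x ^ j)) + b q * (x * x ^ q)"
      by (simp only: distrib_left sum_distrib_left mult.left_commute)
    also have "\<dots> = (\<Sum>j<q. b j * x ^ Suc j) + b q * x ^ p"
      by (simp only: q power_Suc mult.left_commute)
    finally show ?thesis by (simp only: add.assoc add.commute)
  qed
  also have "\<dots> = E (pCons a P)"
    using b(2) by (simp add: E_pCons)
  finally have se: "(\<Sum>j<p. b' j * x ^ j) = E (pCons a P)" .
  show ?case unfolding V_def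
    by (intro CollectI exI[of _ b'] conjI) (use db' se in simp_all)
qed

lemma inv_as_const: "inverse (w :: 'L) = w ^ (p - 1) * inverse w ^ p"
proof (cases "w = 0")
  case True then show ?thesis using p_gt by simp
next
  case False
  have "w ^ p = w ^ (p - 1) * w" using p_gt by (metis Suc_diff_1 less_trans pos2 power_Suc2)
  then show ?thesis using False by (simp add: power_inverse field_simps)
qed

lemma all_V: "z \<in> V"
proof -
  obtain P Q R where R: "R \<noteq> 0" and z: "z = (E P + E Q * y) / E R"
    using repr[of z] unfolding E_def by blast
  define n where "n = (p - 1) div 2"
  have pn: "p - 1 = 2 * n"
  proof -
    have "odd p" using primep p_gt prime_odd_nat by blast
    then show ?thesis unfolding n_def by simp
  qed
  have yp: "y ^ p = y * E (F ^ n)"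
  proof -
    have "y ^ p = y * y ^ (p - 1)" using p_gt by (metis Suc_diff_1 less_trans pos2 power_Suc)
    also have "y ^ (p - 1) = E (F ^ n)" unfolding pn E_power power_mult ysq by (simp add: E_def)
    finally show ?thesis .
  qed
  have EFn: "E (F ^ n) \<noteq> 0" using y_nz yp by (metis mult_zero_right power_not_zero)
  define k1 where "k1 = inverse (E R) ^ p"
  define k2 where "k2 = y ^ p * inverse (E (F ^ n)) ^ p"
  have dk1: "D k1 = 0" unfolding k1_def by (rule D_pow_p)
  have dk2: "D k2 = 0" unfolding k2_def by (simp add: D_mult D_pow_p)
  have y_eq: "y = k2 * E (F ^ n) ^ (p - 1)"
  proof -
    have "y = y ^ p * inverse (E (F ^ n))" using yp EFn by (simp add: field_simps)
    also have "\<dots> = k2 * E (F ^ n) ^ (p - 1)"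
      unfolding k2_def by (subst inv_as_const) (simp add: mult_ac)
    finally show ?thesis .
  qed
  have "z = (E P + E Q * y) * inverse (E R)" using z by (simp add: divide_inverse)
  also have "\<dots> = k1 * (E (P * R ^ (p - 1)) + k2 * E (Q * R ^ (p - 1) * (F ^ n) ^ (p - 1)))"
    by (subst inv_as_const, subst y_eq) (simp add: k1_def E_mult E_power algebra_simps)
  finally have zz: "z = k1 * (E (P * R ^ (p - 1)) + k2 * E (Q * R ^ (p - 1) * (F ^ n) ^ (p - 1)))" .
  show ?thesis unfolding zz
    by (intro V_cmult V_add V_E dk1 dk2)
qed

lemma uniq:
  assumes "D \<psi> = e ^ p * x ^ (p - 1)"
  shows "e = 0"
proof -
  obtain b where b: "\<forall>j. D (b j) = 0" "\<psi> = (\<Sum>j<p. b j * x ^ j)"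
    using all_V[of \<psi>] unfolding V_def by blast
  obtain q where q: "p = Suc q" using p_gt by (cases p) auto
  define c where "c = (\<lambda>j. if j < q then of_nat (Suc j) * b (Suc j) else - (e ^ p))"
  have "D \<psi> = (\<Sum>j<p. b j * of_nat j * x ^ (j - 1))"
    unfolding b(2) D_sum using b(1) by (intro sum.cong refl) (simp add: D_cxj)
  also have "\<dots> = (\<Sum>j<q. of_nat (Suc j) * b (Suc j) * x ^ j)"
    unfolding q by (subst sum.lessThan_Suc_shift) (simp add: mult_ac)
  finally have Dpsi: "D \<psi> = (\<Sum>j<q. of_nat (Suc j) * b (Suc j) * x ^ j)" .
  have "(\<Sum>j\<le>q. c j * x ^ j) = (\<Sum>j<q. c j * x ^ j) + c q * x ^ q"
    by (simp add: lessThan_Suc_atMost[symmetric])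
  also have "\<dots> = D \<psi> - e ^ p * x ^ (p - 1)"
    unfolding Dpsi c_def q by simp
  also have "\<dots> = 0" using assms by simp
  finally have s: "(\<Sum>j\<le>q. c j * x ^ j) = 0" .
  have dc: "\<forall>j\<le>q. D (c j) = 0"
  proof (intro allI impI)
    fix j
    have "D (of_nat (Suc j) * b (Suc j)) = 0" using D_cmult[OF D_of_nat[of "Suc j"]] b(1) by simp
    then show "D (c j) = 0" by (simp add: c_def D_minus D_pow_p)
  qed
  have "\<forall>j\<le>q. c j = 0" by (rule indep) (use q dc s in auto)
  then have "c q = 0" by simp
  then show ?thesis by (simp add: c_def)
qed

end

context hfs
begin

lemma i_power: "\<iota> (c ^ k) = \<iota> c ^ k"
  by (induction k) (simp_all add: i1 i_mult)

lemma antideriv: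
  fixes H :: "'k poly"
  assumes van: "\<And>k. of_nat (Suc k) = (0::'k) \<Longrightarrow> k \<noteq> p - 1 \<Longrightarrow> k \<noteq> 2*p - 1 \<Longrightarrow> coeff H k = 0"
  shows "\<exists>\<Psi>. H = pderiv \<Psi> + monom (coeff H (p-1)) (p-1) + monom (coeff H (2*p-1)) (2*p-1)"
proof -
  define N where "N = Suc (degree H)"
  define \<Psi> where "\<Psi> = (\<Sum>l<N. monom (coeff H l / of_nat (Suc l)) (Suc l))"
  have cP: "coeff \<Psi> (Suc k) = (if k < N then coeff H k / of_nat (Suc k) else 0)" for k
  proof -
    have "coeff \<Psi> (Suc k) = (\<Sum>l<N. if l = k then coeff H l / of_nat (Suc l) else 0)"
      unfolding \<Psi>_def coeff_sum by (intro sum.cong refl) (auto simp: coeff_monom)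
    also have "\<dots> = (if k < N then coeff H k / of_nat (Suc k) else 0)"
      by (simp add: sum.delta)
    finally show ?thesis .
  qed
  have p0: "(of_nat p :: 'k) = 0" using charp by (metis of_nat_CHAR)
  have sp: "Suc (p - 1) = p" "Suc (2*p - 1) = 2*p" using p_gt by auto
  have "H = pderiv \<Psi> + monom (coeff H (p-1)) (p-1) + monom (coeff H (2*p-1)) (2*p-1)"
  proof (rule poly_eqI)
    fix k
    show "coeff H k = coeff (pderiv \<Psi> + monom (coeff H (p-1)) (p-1) + monom (coeff H (2*p-1)) (2*p-1)) k"
    proof (cases "(of_nat (Suc k) :: 'k) = 0")
      case False
      have "k \<noteq> p - 1" "k \<noteq> 2*p - 1" using False sp p0 by (metis of_nat_mult mult_zero_right)+
      moreover have "coeff (pderiv \<Psi>) k = coeff H k"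
      proof (cases "k < N")
        case True then show ?thesis using False by (simp add: coeff_pderiv cP)
      next
        case f2: False
        then have "coeff H k = 0" unfolding N_def by (intro coeff_eq_0) simp
        then show ?thesis using f2 by (simp add: coeff_pderiv cP)
      qed
      ultimately show ?thesis by (simp add: coeff_monom)
    next
      case True
      have pd: "coeff (pderiv \<Psi>) k = 0" by (simp only: coeff_pderiv True mult_zero_left)
      have ne: "p - 1 \<noteq> 2*p - 1" using p_gt by simp
      show ?thesis
      proof (cases "k = p - 1 \<or> k = 2*p - 1")
        case True then show ?thesis using pd ne by (auto simp: coeff_monom)
      next
        case False then show ?thesis using pd van[OF True] by (auto simp: coeff_monom)
      qed
    qed
  qed
  then show ?thesis by blast
qed

lemma cartier_comp:
  fixes i :: nat and a b :: 'k
  assumes van: "\<And>k. of_nat (Suc k) = (0::'k) \<Longrightarrow> k \<noteq> p - 1 \<Longrightarrow> k \<noteq> 2*p - 1 \<Longrightarrow>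
       coeff (monom 1 i * F ^ ((p - 1) div 2)) k = 0"
    and a: "a ^ p = coeff (monom 1 i * F ^ ((p - 1) div 2)) (p - 1)"
    and b: "b ^ p = coeff (monom 1 i * F ^ ((p - 1) div 2)) (2*p - 1)"
  shows "cartier D x p (x ^ i / y) = \<iota> a / y + \<iota> b * (x / y)"
proof -
  define n where "n = (p - 1) div 2"
  define H where "H = monom 1 i * F ^ n"
  have pn: "p - 1 = 2 * n"
  proof -
    have "odd p" using primep p_gt prime_odd_nat by blast
    then show ?thesis unfolding n_def by simp
  qed
  obtain \<Psi> where Psi: "H = pderiv \<Psi> + monom (a ^ p) (p-1) + monom (b ^ p) (2*p-1)"
    using antideriv[of H] van a b unfolding H_def n_def by metis
  have EH: "E H = x ^ i * y ^ (p - 1)"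
  proof -
    have "E F = y ^ 2" using ysq by (simp add: E_def)
    moreover have "y ^ (p - 1) = (y ^ 2) ^ n" by (simp only: pn power_mult)
    ultimately show ?thesis unfolding H_def by (simp add: E_mult E_monom E_power i1)
  qed
  have yp: "y ^ p = y ^ (p - 1) * y" using p_gt by (metis Suc_diff_1 less_trans pos2 power_Suc2)
  have xp: "x ^ (2*p - 1) = x ^ p * x ^ (p - 1)"
  proof -
    have "2*p - 1 = p + (p - 1)" using p_gt by simp
    then show ?thesis by (simp add: power_add)
  qed
  define \<phi> where "\<phi> = E \<Psi> * inverse y ^ p"
  define \<eta> where "\<eta> = \<iota> a / y + \<iota> b * (x / y)"
  have eta_p: "\<eta> ^ p = (\<iota> (a ^ p) + \<iota> (b ^ p) * x ^ p) * inverse y ^ p"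
  proof -
    have "\<eta> = (\<iota> a + \<iota> b * x) * inverse y" unfolding \<eta>_def by (simp add: divide_inverse algebra_simps)
    then have "\<eta> ^ p = (\<iota> a + \<iota> b * x) ^ p * inverse y ^ p" by (simp add: power_mult_distrib)
    also have "(\<iota> a + \<iota> b * x) ^ p = \<iota> (a ^ p) + \<iota> (b ^ p) * x ^ p"
      by (simp add: frobL i_power power_mult_distrib)
    finally show ?thesis .
  qed
  have Dphi: "D \<phi> = inverse y ^ p * E (pderiv \<Psi>)"
    unfolding \<phi>_def by (simp add: D_multc D_pow_p D_E)
  have ex: "x ^ i / y = D \<phi> + \<eta> ^ p * x ^ (p - 1)"
  proof -
    have "D \<phi> + \<eta> ^ p * x ^ (p - 1) = inverse y ^ p * (E (pderiv \<Psi>) + \<iota> (a ^ p) * x ^ (p - 1) + \<iota> (b ^ p) * x ^ (2*p - 1))"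
      unfolding Dphi eta_p xp by (simp add: algebra_simps)
    also have "E (pderiv \<Psi>) + \<iota> (a ^ p) * x ^ (p - 1) + \<iota> (b ^ p) * x ^ (2*p - 1) = E H"
      unfolding Psi by (simp add: E_add E_monom)
    also have "inverse y ^ p * E H = x ^ i / y"
      unfolding EH using y_nz yp by (simp add: field_simps power_inverse)
    finally show ?thesis by simp
  qed
  have un: "\<eta>' = \<eta>" if "x ^ i / y = D \<phi>' + \<eta>' ^ p * x ^ (p - 1)" for \<eta>' \<phi>'
  proof -
    have "D (\<phi>' - \<phi>) = (\<eta> - \<eta>') ^ p * x ^ (p - 1)"
      using that ex by (simp add: D_diff frob_diffL algebra_simps)
    then have "\<eta> - \<eta>' = 0" by (rule uniq)
    then show ?thesis by simp
  qed
  show ?thesis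
    unfolding cartier_def
  proof (rule the_equality)
    show "\<exists>\<phi>. x ^ i / y = D \<phi> + (\<iota> a / y + \<iota> b * (x / y)) ^ p * x ^ (p - 1)"
      using ex unfolding \<eta>_def by blast
  next
    fix \<eta>' assume "\<exists>\<phi>'. x ^ i / y = D \<phi>' + \<eta>' ^ p * x ^ (p - 1)"
    then show "\<eta>' = \<iota> a / y + \<iota> b * (x / y)" using un unfolding \<eta>_def by blast
  qed
qed

end

theorem theorem4p1:
  fixes p :: nat and t :: "'k::field" and \<iota> :: "'k \<Rightarrow> 'L::field"
    and x y :: 'L and D :: "'L \<Rightarrow> 'L"
  assumes "prime p" and "p \<noteq> 2" and "p \<noteq> 5"
    and "is_perfect_closure_Fpt p t"
    and "is_hyperelliptic_function_field \<iota> [:2 - 4 * t, 5, 0, -5, 0, 1:] x y D"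
  shows "\<exists>m11 m12 m21 m22 :: 'k.
     cartier D x p (1 / y) = \<iota> m11 * (1 / y) + \<iota> m21 * (x / y) \<and>
     cartier D x p (x / y) = \<iota> m12 * (1 / y) + \<iota> m22 * (x / y) \<and>
     (p mod 5 \<in> {1, 4} \<longrightarrow> m12 = 0 \<and> m21 = 0) \<and>
     (p mod 5 \<in> {2, 3} \<longrightarrow> m11 = 0 \<and> m22 = 0) \<and>
     (\<forall>m \<in> {m11, m12, m21, m22}. m ^ p \<in> Fp_poly_at t)"
proof -
  define F :: "'k poly" where "F = [:2 - 4 * t, 5, 0, -5, 0, 1:]"
  have charp: "CHAR('k) = p" and surjp: "surj (\<lambda>a::'k. a ^ p)"
    using assms(4) unfolding is_perfect_closure_Fpt_def by blast+
  have Fnz: "F \<noteq> 0" unfolding F_def by simp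
  interpret hfs \<iota> F x y D p
    by unfold_locales (use assms charp Fnz in \<open>simp_all add: F_def\<close>)
  define n where "n = (p - 1) div 2"
  have pn: "p - 1 = 2 * n"
  proof -
    have "odd p" using primep p_gt prime_odd_nat by blast
    then show ?thesis unfolding n_def by simp
  qed
  have degFn: "degree (F ^ n) \<le> 5 * n"
  proof -
    have "degree (F ^ n) \<le> degree F * n" by (rule degree_power_le)
    also have "degree F = 5" unfolding F_def by simp
    finally show ?thesis by simp
  qed
  define cH where "cH i k = coeff (monom 1 i * F ^ n) k" for i k
  have cH_eq: "cH i k = (if k < i then 0 else coeff (F ^ n) (k - i))" for i k
    unfolding cH_def by (simp add: coeff_monom_mult)
  have van: "cH i k = 0" if "i \<le> 1" "of_nat (Suc k) = (0::'k)" "k \<noteq> p - 1" "k \<noteq> 2*p - 1" for i k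
  proof -
    have "p dvd Suc k" using that(2) charp of_nat_eq_0_iff_char_dvd[of "Suc k", where 'a='k] by simp
    then obtain c where c: "Suc k = p * c" by blast
    have "c \<noteq> 0" using c by (metis mult_0_right nat.simps(3))
    moreover have "c \<noteq> 1" using c that(3) by auto
    moreover have "c \<noteq> 2" using c that(4) by auto
    ultimately have "c \<ge> 3" by simp
    then have "Suc k \<ge> 3 * p" using c by simp
    then have "k - i > 5 * n" using that(1) pn p_gt by linarith
    then have "coeff (F ^ n) (k - i) = 0" using degFn by (intro coeff_eq_0) simp
    then show ?thesis by (simp add: cH_eq)
  qed
  obtain m11 where m11: "m11 ^ p = cH 0 (p - 1)" using surjp by (metis surjD)
  obtain m21 where m21: "m21 ^ p = cH 0 (2*p - 1)" using surjp by (metis surjD)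
  obtain m12 where m12: "m12 ^ p = cH 1 (p - 1)" using surjp by (metis surjD)
  obtain m22 where m22: "m22 ^ p = cH 1 (2*p - 1)" using surjp by (metis surjD)
  have C0: "cartier D x p (x ^ 0 / y) = \<iota> m11 / y + \<iota> m21 * (x / y)"
  proof (rule cartier_comp)
    fix k assume k: "of_nat (Suc k) = (0::'k)" "k \<noteq> p - 1" "k \<noteq> 2*p - 1"
    show "coeff (monom 1 0 * F ^ ((p - 1) div 2)) k = 0" using van[of 0 k, OF _ k] by (simp add: cH_def n_def)
  next
    show "m11 ^ p = coeff (monom 1 0 * F ^ ((p - 1) div 2)) (p - 1)" using m11 by (simp only: cH_def n_def)
  next
    show "m21 ^ p = coeff (monom 1 0 * F ^ ((p - 1) div 2)) (2*p - 1)" using m21 by (simp only: cH_def n_def)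
  qed
  have C1: "cartier D x p (x ^ 1 / y) = \<iota> m12 / y + \<iota> m22 * (x / y)"
  proof (rule cartier_comp)
    fix k assume k: "of_nat (Suc k) = (0::'k)" "k \<noteq> p - 1" "k \<noteq> 2*p - 1"
    show "coeff (monom 1 1 * F ^ ((p - 1) div 2)) k = 0" using van[of 1 k, OF _ k] by (simp add: cH_def n_def)
  next
    show "m12 ^ p = coeff (monom 1 1 * F ^ ((p - 1) div 2)) (p - 1)" using m12 by (simp only: cH_def n_def)
  next
    show "m22 ^ p = coeff (monom 1 1 * F ^ ((p - 1) div 2)) (2*p - 1)" using m22 by (simp only: cH_def n_def)
  qed
  have zero_of: "m = 0" if "m ^ p = cH i k" "\<forall>mm\<le>n. int p dvd coeff (hpol ^ mm) (k - i)" "i \<le> k" for m i k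
  proof -
    have "coeff (F ^ n) (k - i) = 0"
      unfolding F_def by (rule coeff_Fpow_zero[OF charp]) (use that(2) in auto)
    then have "m ^ p = 0" using that(1,3) by (simp add: cH_eq)
    then show ?thesis by simp
  qed
  have mn: "2 * mm \<le> p - 1" if "mm \<le> n" for mm using that pn by simp
  have p3: "p \<ge> 3" using p_gt by simp
  have cv: "int p dvd coeff (hpol ^ mm) k" if "mm \<le> n"
    "(p mod 5 \<in> {2,3} \<and> (k = p - 1 \<or> k = 2*p - 2)) \<or> (p mod 5 \<in> {1,4} \<and> (k = p - 2 \<or> k = 2*p - 1))" for mm k
    using core_vanish[OF assms(1-3) mn[OF that(1)] that(2)] .
  have V14: "m12 = 0 \<and> m21 = 0" if "p mod 5 \<in> {1, 4}"
  proof
    show "m12 = 0"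
      by (rule zero_of[OF m12]) (use that p3 in \<open>auto intro!: cv\<close>)
    show "m21 = 0"
      by (rule zero_of[OF m21]) (use that p3 in \<open>auto intro!: cv\<close>)
  qed
  have V23: "m11 = 0 \<and> m22 = 0" if "p mod 5 \<in> {2, 3}"
  proof
    show "m11 = 0"
      by (rule zero_of[OF m11]) (use that p3 in \<open>auto intro!: cv\<close>)
    show "m22 = 0"
      by (rule zero_of[OF m22]) (use that p3 in \<open>auto intro!: cv\<close>)
  qed
  have Fp: "cH i k \<in> Fp_poly_at t" for i k
  proof (cases "k < i")
    case True then show ?thesis using Fp_of_int[of 0 t] by (simp add: cH_eq)
  next
    case False then show ?thesis using coeff_Fpow_Fp[of t n "k - i"] by (simp add: cH_eq F_def)
  qed
  show ?thesis
  proof (intro exI conjI)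
    show "cartier D x p (1 / y) = \<iota> m11 * (1 / y) + \<iota> m21 * (x / y)"
      using C0 by simp
    show "cartier D x p (x / y) = \<iota> m12 * (1 / y) + \<iota> m22 * (x / y)"
      using C1 by simp
    show "p mod 5 \<in> {1, 4} \<longrightarrow> m12 = 0 \<and> m21 = 0" using V14 by blast
    show "p mod 5 \<in> {2, 3} \<longrightarrow> m11 = 0 \<and> m22 = 0" using V23 by blast
    show "\<forall>m \<in> {m11, m12, m21, m22}. m ^ p \<in> Fp_poly_at t"
      using Fp m11 m12 m21 m22 by auto
  qed
qed


end
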